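(* There is no functional $M$ of type $3$ with $\mathsf{PR}(M)$ which is Kleene-computable (via the schemes S1–S9) in some functional $H$ of type $2$.
   Context: $C=2^{\mathbb N}$ is Cantor space. For $f\in C$ and $n\in\mathbb N$, $\overline{f}n=\langle f(0),\dots,f(n-1)\rangle$, and for a finite binary sequence $\sigma$, $[\sigma]$ is the set of $g\in C$ extending $\sigma$. For $F,G:C\to\mathbb N$, $\mathsf{LOC}(F,G)$ means $(\forall f,g\in C)\big(g\in[\overline{f}G(f)]\to F(g)\le G(f)\big)$ ($G$ is a realiser for local boundedness of $F$). For a functional $M$ mapping functionals $G:C\to\mathbb N$ to natural numbers, $\mathsf{PR}(M)$ means $(\forall F,G:C\to\mathbb N)\big(\mathsf{LOC}(F,G)\to(\forall g\in C)(F(g)\le M(G))\big)$; such $M$ is called a Pincherle realiser (PR). Computability is Kleene's higher-order computability given by the schemes S1–S9. *)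

theory Defs
  imports Main "HOL-Library.Countable"
begin

text \<open>Type-1 objects are nat => nat, type-2 objects are (nat => nat) => nat,
  type-3 objects are ((nat => nat) => nat) => nat.  Functionals F, G : C -> N are represented
  by type-2 objects, of which only the restriction to C matters.\<close>

definition cantor :: "(nat \<Rightarrow> nat) set" where
  "cantor = {f. \<forall>n. f n \<le> 1}"

definition cbar :: "(nat \<Rightarrow> nat) \<Rightarrow> nat \<Rightarrow> nat list" where
  "cbar f n = map f [0..<n]"

definition cyl :: "nat list \<Rightarrow> (nat \<Rightarrow> nat) set" where
  "cyl \<sigma> = {g \<in> cantor. cbar g (length \<sigma>) = \<sigma>}"

definition LOC :: "((nat \<Rightarrow> nat) \<Rightarrow> nat) \<Rightarrow> ((nat \<Rightarrow> nat) \<Rightarrow> nat) \<Rightarrow> bool" where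
  "LOC F G \<longleftrightarrow> (\<forall>f\<in>cantor. \<forall>g\<in>cantor. g \<in> cyl (cbar f (G f)) \<longrightarrow> F g \<le> G f)"

definition PR :: "(((nat \<Rightarrow> nat) \<Rightarrow> nat) \<Rightarrow> nat) \<Rightarrow> bool" where
  "PR M \<longleftrightarrow> (\<forall>F G. LOC F G \<longrightarrow> (\<forall>g\<in>cantor. F g \<le> M G))"

text \<open>Indices are elements of a countable datatype; S9 decodes a natural number
  via from_nat.  Argument lists consist of objects of types 0, 1, 2; in a
  computation whose inputs have type at most 2, all arguments have type at most 2.\<close>

datatype prog =
    S1
  | S2 nat
  | S3
  | S4 prog prog
  | S5 prog prog
  | S6 nat prog
  | S7
  | S8 prog
  | S9

instance prog :: countable by countable_datatype

datatype arg = A0 nat | A1 "nat \<Rightarrow> nat" | A2 "(nat \<Rightarrow> nat) \<Rightarrow> nat"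

definition swap_at :: "nat \<Rightarrow> 'a list \<Rightarrow> 'a list" where
  "swap_at k xs = xs[k := xs ! Suc k, Suc k := xs ! k]"

inductive kleene :: "prog \<Rightarrow> arg list \<Rightarrow> nat \<Rightarrow> bool" where
  k1: "kleene S1 (A0 a # xs) (Suc a)"
| k2: "kleene (S2 q) xs q"
| k3: "kleene S3 (A0 a # xs) a"
| k4: "kleene e2 xs b \<Longrightarrow> kleene e1 (A0 b # xs) c \<Longrightarrow> kleene (S4 e1 e2) xs c"
| k5_0: "kleene e1 xs c \<Longrightarrow> kleene (S5 e1 e2) (A0 0 # xs) c"
| k5_S: "kleene (S5 e1 e2) (A0 a # xs) b \<Longrightarrow> kleene e2 (A0 b # A0 a # xs) c
         \<Longrightarrow> kleene (S5 e1 e2) (A0 (Suc a) # xs) c"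
| k6: "Suc k < length xs \<Longrightarrow> kleene e1 (swap_at k xs) c \<Longrightarrow> kleene (S6 k e1) xs c"
| k7: "kleene S7 (A1 f # A0 a # xs) (f a)"
| k8: "(\<forall>a. kleene e1 (A0 a # A2 F # xs) (g a)) \<Longrightarrow> kleene (S8 e1) (A2 F # xs) (F g)"
| k9: "kleene (from_nat d) xs c \<Longrightarrow> kleene S9 (A0 d # xs) c"

definition computable_in :: "(((nat \<Rightarrow> nat) \<Rightarrow> nat) \<Rightarrow> nat) \<Rightarrow> ((nat \<Rightarrow> nat) \<Rightarrow> nat) \<Rightarrow> bool" where
  "computable_in M H \<longleftrightarrow> (\<exists>e. \<forall>G. kleene e [A2 G, A2 H] (M G))"

end

theory Submission
  imports Defs
begin

datatype sarg = SN nat | SG | SH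

instance sarg :: countable by countable_datatype

type_synonym grel = "((nat \<Rightarrow> nat) \<times> nat) set"

inductive kP :: "grel \<Rightarrow> ((nat \<Rightarrow> nat) \<Rightarrow> nat) \<Rightarrow> prog \<Rightarrow> sarg list \<Rightarrow> nat \<Rightarrow> bool"
  for R :: grel and H :: "(nat \<Rightarrow> nat) \<Rightarrow> nat" where
  p1: "kP R H S1 (SN a # xs) (Suc a)"
| p2: "kP R H (S2 q) xs q"
| p3: "kP R H S3 (SN a # xs) a"
| p4: "kP R H e2 xs b \<Longrightarrow> kP R H e1 (SN b # xs) c \<Longrightarrow> kP R H (S4 e1 e2) xs c"
| p5_0: "kP R H e1 xs c \<Longrightarrow> kP R H (S5 e1 e2) (SN 0 # xs) c"
| p5_S: "kP R H (S5 e1 e2) (SN a # xs) b \<Longrightarrow> kP R H e2 (SN b # SN a # xs) c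
         \<Longrightarrow> kP R H (S5 e1 e2) (SN (Suc a) # xs) c"
| p6: "Suc k < length xs \<Longrightarrow> kP R H e1 (swap_at k xs) c \<Longrightarrow> kP R H (S6 k e1) xs c"
| p8G: "(\<forall>a. kP R H e1 (SN a # SG # xs) (g a)) \<Longrightarrow> (g, v) \<in> R \<Longrightarrow> kP R H (S8 e1) (SG # xs) v"
| p8H: "(\<forall>a. kP R H e1 (SN a # SH # xs) (g a)) \<Longrightarrow> kP R H (S8 e1) (SH # xs) (H g)"
| p9: "kP R H (from_nat d) xs c \<Longrightarrow> kP R H S9 (SN d # xs) c"

definition sv :: "grel \<Rightarrow> bool" where
  "sv R \<longleftrightarrow> (\<forall>g v v'. (g, v) \<in> R \<longrightarrow> (g, v') \<in> R \<longrightarrow> v = v')"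

lemma kP_mono: "kP R H e xs c \<Longrightarrow> R \<subseteq> R' \<Longrightarrow> kP R' H e xs c"
proof (induction rule: kP.induct)
  case (p8G e1 xs g v) then show ?case by (blast intro: kP.intros)
qed (auto intro: kP.intros)


inductive_cases kS1: "kleene S1 xs c"
inductive_cases kS2: "kleene (S2 q) xs c"
inductive_cases kS3: "kleene S3 xs c"
inductive_cases kS4: "kleene (S4 e1 e2) xs c"
inductive_cases kS5: "kleene (S5 e1 e2) xs c"
inductive_cases kS6: "kleene (S6 k e1) xs c"
inductive_cases kS7: "kleene S7 xs c"
inductive_cases kS8: "kleene (S8 e1) xs c"
inductive_cases kS9: "kleene S9 xs c"

lemma kleene_det: "kleene e xs c \<Longrightarrow> kleene e xs c' \<Longrightarrow> c = c'"
proof (induction arbitrary: c' rule: kleene.induct)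
  case (k1 a xs)
  from k1.prems show ?case by (rule kS1) simp
next
  case (k2 q xs)
  from k2.prems show ?case by (rule kS2) simp
next
  case (k3 a xs)
  from k3.prems show ?case by (rule kS3) simp
next
  case (k4 e2 xs b e1 c)
  from k4.prems obtain b' where "kleene e2 xs b'" "kleene e1 (A0 b' # xs) c'" by (rule kS4)
  then show ?case using k4.IH by blast
next
  case (k5_0 e1 xs c e2)
  from k5_0.prems show ?case by (rule kS5) (use k5_0.IH in simp_all)
next
  case (k5_S e1 e2 a xs b c)
  from k5_S.prems show ?case
  proof (rule kS5)
    fix b' a' xs' assume "A0 (Suc a) # xs = A0 (Suc a') # xs'" "kleene (S5 e1 e2) (A0 a' # xs') b'"
      "kleene e2 (A0 b' # A0 a' # xs') c'"
    then show ?thesis using k5_S.IH by auto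
  qed auto
next
  case (k6 k xs e1 c)
  from k6.prems show ?case by (rule kS6) (use k6.IH in simp)
next
  case (k7 f a xs)
  from k7.prems show ?case by (rule kS7) simp
next
  case (k8 e1 F xs g)
  from k8.prems obtain g' where g': "\<forall>a. kleene e1 (A0 a # A2 F # xs) (g' a)" "c' = F g'"
    by (auto elim: kS8)
  have "g = g'" using k8.IH g'(1) by blast
  then show ?case using g' by simp
next
  case (k9 d xs c)
  from k9.prems show ?case by (rule kS9) (use k9.IH in simp)
qed


inductive_cases pS1: "kP R H S1 xs c"
inductive_cases pS2: "kP R H (S2 q) xs c"
inductive_cases pS3: "kP R H S3 xs c"
inductive_cases pS4: "kP R H (S4 e1 e2) xs c"
inductive_cases pS5: "kP R H (S5 e1 e2) xs c"
inductive_cases pS6: "kP R H (S6 k e1) xs c"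
inductive_cases pS8: "kP R H (S8 e1) xs c"
inductive_cases pS9: "kP R H S9 xs c"

lemma kP_det: "kP R H e xs c \<Longrightarrow> sv R \<Longrightarrow> kP R H e xs c' \<Longrightarrow> c = c'"
proof (induction arbitrary: c' rule: kP.induct)
  case (p1 a xs)
  from p1.prems(2) show ?case by (rule pS1) simp
next
  case (p2 q xs)
  from p2.prems(2) show ?case by (rule pS2) simp
next
  case (p3 a xs)
  from p3.prems(2) show ?case by (rule pS3) simp
next
  case (p4 e2 xs b e1 c)
  from p4.prems(2) obtain b' where "kP R H e2 xs b'" "kP R H e1 (SN b' # xs) c'" by (rule pS4)
  then show ?case using p4.IH p4.prems(1) by blast
next
  case (p5_0 e1 xs c e2)
  from p5_0.prems(2) show ?case by (rule pS5) (use p5_0.IH p5_0.prems(1) in simp_all)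
next
  case (p5_S e1 e2 a xs b c)
  from p5_S.prems(2) show ?case
  proof (rule pS5)
    fix b' a' xs' assume "SN (Suc a) # xs = SN (Suc a') # xs'" "kP R H (S5 e1 e2) (SN a' # xs') b'"
      "kP R H e2 (SN b' # SN a' # xs') c'"
    then show ?thesis using p5_S.IH p5_S.prems(1) by auto
  qed auto
next
  case (p6 k xs e1 c)
  from p6.prems(2) show ?case by (rule pS6) (use p6.IH p6.prems(1) in simp)
next
  case (p8G e1 xs g v)
  from p8G.prems(2) show ?case
  proof (rule pS8)
    fix xs' g' assume a: "SG # xs = SG # xs'" "\<forall>a. kP R H e1 (SN a # SG # xs') (g' a)"
      "(g', c') \<in> R"
    then have "g = g'" using p8G.IH p8G.prems(1) by auto
    then show ?thesis using a(3) \<open>(g, v) \<in> R\<close> p8G.prems(1) unfolding sv_def by blast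
  qed auto
next
  case (p8H e1 xs g)
  from p8H.prems(2) show ?case
  proof (rule pS8)
    fix xs' g' assume a: "SH # xs = SH # xs'" "c' = H g'" "\<forall>a. kP R H e1 (SN a # SH # xs') (g' a)"
    then have "g = g'" using p8H.IH p8H.prems(1) by auto
    then show ?thesis using a(2) by simp
  qed auto
next
  case (p9 d xs c)
  from p9.prems(2) show ?case by (rule pS9) (use p9.IH p9.prems(1) in simp)
qed

fun emb :: "((nat \<Rightarrow> nat) \<Rightarrow> nat) \<Rightarrow> ((nat \<Rightarrow> nat) \<Rightarrow> nat) \<Rightarrow> sarg \<Rightarrow> arg" where
  "emb G H (SN n) = A0 n"
| "emb G H SG = A2 G"
| "emb G H SH = A2 H"

lemma map_A0: "A0 a # xs = map (emb G H) ys \<Longrightarrow> \<exists>ys'. ys = SN a # ys' \<and> xs = map (emb G H) ys'"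
proof (cases ys)
  case (Cons y ys') assume "A0 a # xs = map (emb G H) ys" then show ?thesis using Cons by (cases y) auto
qed auto

lemma map_A2: "A2 F # xs = map (emb G H) ys \<Longrightarrow>
  \<exists>y ys'. ys = y # ys' \<and> xs = map (emb G H) ys' \<and> ((y = SG \<and> F = G) \<or> (y = SH \<and> F = H))"
proof (cases ys)
  case (Cons y ys') assume "A2 F # xs = map (emb G H) ys" then show ?thesis using Cons by (cases y) auto
qed auto

lemma map_A1: "A1 f # xs = map (emb G H) ys \<Longrightarrow> False"
proof (cases ys)
  case (Cons y ys') assume "A1 f # xs = map (emb G H) ys" then show ?thesis using Cons by (cases y) auto
qed auto

lemma swap_map: "Suc k < length xs \<Longrightarrow> map f (swap_at k xs) = swap_at k (map f xs)"
  by (simp add: swap_at_def map_update)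

lemma kleene_to_kP:
  assumes cl: "\<And>e1 ys g. (\<forall>a. kP R H e1 (SN a # ys) (g a)) \<Longrightarrow> g \<in> Domain R"
    and ag: "\<And>g v. (g, v) \<in> R \<Longrightarrow> G g = v"
  shows "kleene e xs c \<Longrightarrow> xs = map (emb G H) ys \<Longrightarrow> kP R H e ys c"
proof (induction arbitrary: ys rule: kleene.induct)
  case (k1 a xs) then obtain ys' where "ys = SN a # ys'" using map_A0[OF k1.prems] by blast
  then show ?case using kP.p1 by simp
next
  case (k2 q xs) then show ?case using kP.p2 by blast
next
  case (k3 a xs) then obtain ys' where "ys = SN a # ys'" using map_A0[OF k3.prems] by blast
  then show ?case using kP.p3 by simp
next
  case (k4 e2 xs b e1 c)
  have "kP R H e2 ys b" using k4.IH(1) k4.prems by blast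
  moreover have "kP R H e1 (SN b # ys) c" using k4.IH(2) k4.prems by simp
  ultimately show ?case by (rule kP.p4)
next
  case (k5_0 e1 xs c e2)
  then obtain ys' where "ys = SN 0 # ys'" "xs = map (emb G H) ys'" using map_A0[OF k5_0.prems] by blast
  then show ?case using k5_0.IH kP.p5_0 by blast
next
  case (k5_S e1 e2 a xs b c)
  then obtain ys' where y: "ys = SN (Suc a) # ys'" "xs = map (emb G H) ys'" using map_A0[OF k5_S.prems] by blast
  have "kP R H (S5 e1 e2) (SN a # ys') b" using k5_S.IH(1) y by simp
  moreover have "kP R H e2 (SN b # SN a # ys') c" using k5_S.IH(2) y by simp
  ultimately show ?case using y kP.p5_S by blast
next
  case (k6 k xs e1 c)
  have l: "Suc k < length ys" using k6.hyps(1) k6.prems by simp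
  have "swap_at k xs = map (emb G H) (swap_at k ys)" using swap_map[OF l, of "emb G H"] k6.prems by simp
  then have "kP R H e1 (swap_at k ys) c" using k6.IH by blast
  then show ?case using l kP.p6 by blast
next
  case (k7 f a xs) then show ?case using map_A1[OF k7.prems] by blast
next
  case (k8 e1 F xs g)
  then obtain y ys' where y: "ys = y # ys'" "xs = map (emb G H) ys'"
     "(y = SG \<and> F = G) \<or> (y = SH \<and> F = H)" using map_A2[OF k8.prems] by blast
  have IH: "\<forall>a. kP R H e1 (SN a # y # ys') (g a)" using k8.IH y by (cases y) auto
  show ?case
  proof (cases "y = SG")
    case True
    then have FG: "F = G" using y(3) by simp
    have "g \<in> Domain R" by (rule cl) (rule IH)
    then obtain v where v: "(g, v) \<in> R" by blast
    then have "G g = v" by (rule ag)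
    then show ?thesis using kP.p8G[of R H e1 ys' g v] IH v True y(1) FG by simp
  next
    case False
    then have "y = SH" "F = H" using y(3) by auto
    then show ?thesis using kP.p8H[of R H e1 ys' g] IH y(1) by simp
  qed
next
  case (k9 d xs c)
  then obtain ys' where "ys = SN d # ys'" "xs = map (emb G H) ys'" using map_A0[OF k9.prems] by blast
  then show ?case using k9.IH kP.p9 by blast
qed

lemma kP_to_kleene:
  assumes ag: "\<And>g v. (g, v) \<in> R \<Longrightarrow> G g = v"
  shows "kP R H e ys c \<Longrightarrow> kleene e (map (emb G H) ys) c"
proof (induction rule: kP.induct)
  case (p6 k xs e1 c)
  then show ?case using swap_map[of k xs "emb G H"] kleene.k6[of k "map (emb G H) xs" e1 c] by simp
next
  case (p8G e1 xs g v)
  then show ?case using kleene.k8[of e1 G "map (emb G H) xs" g] ag by simp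
next
  case (p8H e1 xs g)
  then show ?case using kleene.k8[of e1 H "map (emb G H) xs" g] by simp
qed (auto intro: kleene.intros)

definition sound :: "((nat \<Rightarrow> nat) \<Rightarrow> nat) \<Rightarrow> grel \<Rightarrow> bool" where
  "sound H R \<longleftrightarrow> sv R \<and> (\<forall>g v. (g, v) \<in> R \<longrightarrow>
     (\<exists>e1 ys. v = Suc (to_nat (e1 :: prog, ys :: sarg list)) \<and> (\<forall>a. kP R H e1 (SN a # ys) (g a))))"

lemma exists_max: "\<exists>R. sound H R \<and> (\<forall>R'. sound H R' \<longrightarrow> R \<subseteq> R' \<longrightarrow> R' = R)"
proof -
  have "\<forall>C\<in>chains {R. sound H R}. \<Union>C \<in> {R. sound H R}"
  proof
    fix C assume C: "C \<in> chains {R. sound H R}"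
    then have sub: "C \<subseteq> {R. sound H R}" and ch: "\<forall>A\<in>C. \<forall>B\<in>C. A \<subseteq> B \<or> B \<subseteq> A"
      unfolding chains_def chain_subset_def by auto
    have "sv (\<Union>C)" unfolding sv_def
    proof (intro allI impI)
      fix g v v' assume "(g, v) \<in> \<Union>C" "(g, v') \<in> \<Union>C"
      then obtain A B where AB: "A \<in> C" "B \<in> C" "(g, v) \<in> A" "(g, v') \<in> B" by blast
      then have "sv A" "sv B" using sub unfolding sound_def by auto
      then show "v = v'" using ch AB unfolding sv_def by blast
    qed
    moreover have "\<forall>g v. (g, v) \<in> \<Union>C \<longrightarrow>
     (\<exists>e1 ys. v = Suc (to_nat (e1 :: prog, ys :: sarg list)) \<and> (\<forall>a. kP (\<Union>C) H e1 (SN a # ys) (g a)))"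
    proof (intro allI impI)
      fix g v assume "(g, v) \<in> \<Union>C"
      then obtain A where A: "A \<in> C" "(g, v) \<in> A" by blast
      then obtain e1 ys where "v = Suc (to_nat (e1 :: prog, ys :: sarg list))" "\<forall>a. kP A H e1 (SN a # ys) (g a)"
        using sub unfolding sound_def by blast
      moreover have "A \<subseteq> \<Union>C" using A by blast
      ultimately show "\<exists>e1 ys. v = Suc (to_nat (e1 :: prog, ys :: sarg list)) \<and> (\<forall>a. kP (\<Union>C) H e1 (SN a # ys) (g a))"
        using kP_mono by blast
    qed
    ultimately show "\<Union>C \<in> {R. sound H R}" unfolding sound_def by blast
  qed
  from Zorn_Lemma[OF this] show ?thesis by blast
qed

lemma max_closed:
  assumes s: "sound H R" and mx: "\<forall>R'. sound H R' \<longrightarrow> R \<subseteq> R' \<longrightarrow> R' = R"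
    and d: "\<forall>a. kP R H e1 (SN a # ys) (g a)"
  shows "g \<in> Domain R"
proof (rule ccontr)
  assume nd: "g \<notin> Domain R"
  define R' where "R' = insert (g, Suc (to_nat (e1, ys))) R"
  have sub: "R \<subseteq> R'" unfolding R'_def by blast
  have "sv R'" using s nd unfolding R'_def sv_def sound_def by blast
  moreover have "\<forall>g v. (g, v) \<in> R' \<longrightarrow>
     (\<exists>e1 ys. v = Suc (to_nat (e1 :: prog, ys :: sarg list)) \<and> (\<forall>a. kP R' H e1 (SN a # ys) (g a)))"
  proof (intro allI impI)
    fix g' v assume "(g', v) \<in> R'"
    then consider "g' = g" "v = Suc (to_nat (e1, ys))" | "(g', v) \<in> R" unfolding R'_def by blast
    then show "\<exists>e1 ys. v = Suc (to_nat (e1 :: prog, ys :: sarg list)) \<and> (\<forall>a. kP R' H e1 (SN a # ys) (g' a))"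
    proof cases
      case 1 then show ?thesis using d kP_mono[OF _ sub] by blast
    next
      case 2 then show ?thesis using s kP_mono[OF _ sub] unfolding sound_def by blast
    qed
  qed
  ultimately have "sound H R'" unfolding sound_def by blast
  then have "R' = R" using mx sub by blast
  then show False using nd unfolding R'_def by blast
qed

lemma sound_inj:
  assumes s: "sound H R" and a: "(g, v) \<in> R" "(g', v) \<in> R"
  shows "g = g'"
proof -
  obtain e1 ys where 1: "v = Suc (to_nat (e1 :: prog, ys :: sarg list))" "\<forall>a. kP R H e1 (SN a # ys) (g a)"
    using s a(1) unfolding sound_def by blast
  obtain e1' ys' where 2: "v = Suc (to_nat (e1' :: prog, ys' :: sarg list))" "\<forall>a. kP R H e1' (SN a # ys') (g' a)"
    using s a(2) unfolding sound_def by blast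
  have "(e1, ys) = (e1', ys')" using 1(1) 2(1) by simp
  then have "\<forall>a. kP R H e1 (SN a # ys) (g' a)" using 2 by simp
  moreover have "sv R" using s unfolding sound_def by simp
  ultimately show ?thesis using 1(2) kP_det by blast
qed


lemma map_upt_eq: "map g [0..<L] = map f [0..<L] \<Longrightarrow> k < L \<Longrightarrow> g k = f k"
  by (simp add: map_eq_conv)

theorem theorem3p1:
  shows "\<not> (\<exists>M H. PR M \<and> computable_in M H)"
proof
  assume "\<exists>M H. PR M \<and> computable_in M H"
  then obtain M H e where pr: "PR M" and comp: "\<And>G. kleene e [A2 G, A2 H] (M G)"
    unfolding computable_in_def by blast
  obtain R where s: "sound H R" and mx: "\<forall>R'. sound H R' \<longrightarrow> R \<subseteq> R' \<longrightarrow> R' = R"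
    using exists_max by blast
  have svR: "sv R" using s unfolding sound_def by simp
  have cl: "\<And>e1 ys g. (\<forall>a. kP R H e1 (SN a # ys) (g a)) \<Longrightarrow> g \<in> Domain R"
    using max_closed[OF s mx] by blast
  have someR: "\<And>g v. (g, v) \<in> R \<Longrightarrow> (SOME v. (g, v) \<in> R) = v"
    using svR unfolding sv_def by (metis someI)
  define G0 where "G0 = (\<lambda>g. if g \<in> Domain R then (SOME v. (g, v) \<in> R) else 0)"
  have ag0: "\<And>g v. (g, v) \<in> R \<Longrightarrow> G0 g = v" unfolding G0_def using someR by auto
  define c where "c = M G0"
  have kk: "kleene e (map (emb G0 H) [SG, SH]) c" using comp[of G0] unfolding c_def by simp
  have kp: "kP R H e [SG, SH] c"
  proof (rule kleene_to_kP[where R=R and H=H and G=G0])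
    show "\<And>e1 ys g. (\<forall>a. kP R H e1 (SN a # ys) (g a)) \<Longrightarrow> g \<in> Domain R" by (rule cl)
    show "\<And>g v. (g, v) \<in> R \<Longrightarrow> G0 g = v" by (rule ag0)
    show "kleene e (map (emb G0 H) [SG, SH]) c" by (rule kk)
  qed simp
  define g0 where "g0 = (\<lambda>n. if \<exists>g. (g, Suc n) \<in> R \<and> g n = 0 then 1 else (0::nat))"
  define G1 where "G1 = (\<lambda>g. if g \<in> Domain R then (SOME v. (g, v) \<in> R)
      else if g = g0 then Suc c else Suc (LEAST k. g k \<noteq> g0 k))"
  have ag1: "\<And>g v. (g, v) \<in> R \<Longrightarrow> G1 g = v" unfolding G1_def using someR by auto
  have "kleene e (map (emb G1 H) [SG, SH]) c"
  proof (rule kP_to_kleene[where R=R and H=H and G=G1])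
    show "\<And>g v. (g, v) \<in> R \<Longrightarrow> G1 g = v" by (rule ag1)
  qed (rule kp)
  then have "kleene e [A2 G1, A2 H] c" by simp
  then have MG1: "M G1 = c" using comp[of G1] kleene_det by blast
  define F where "F = (\<lambda>g. if g = g0 then Suc c else (0::nat))"
  have g0C: "g0 \<in> cantor" unfolding cantor_def g0_def by auto
  have "LOC F G1" unfolding LOC_def
  proof (intro ballI impI)
    fix f g assume fC: "f \<in> cantor" and gC: "g \<in> cantor" and gc: "g \<in> cyl (cbar f (G1 f))"
    have eq: "map g [0..<G1 f] = map f [0..<G1 f]" using gc unfolding cyl_def cbar_def by simp
    show "F g \<le> G1 f"
    proof (cases "g = g0")
      case False then show ?thesis unfolding F_def by simp
    next
      case True
      show ?thesis
      proof (cases "f \<in> Domain R")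
        case True
        then obtain v where v: "(f, v) \<in> R" by blast
        then obtain e1 ys where vs: "v = Suc (to_nat (e1 :: prog, ys :: sarg list))"
          using s unfolding sound_def by blast
        define n where "n = to_nat (e1, ys)"
        have G1f: "G1 f = Suc n" using ag1[OF v] vs n_def by simp
        have "g0 n \<noteq> f n"
        proof (cases "f n = 0")
          case True
          have "(f, Suc n) \<in> R" using v vs n_def by simp
          then have "\<exists>g. (g, Suc n) \<in> R \<and> g n = 0" using True by blast
          then have "g0 n = 1" unfolding g0_def by (simp only: if_True)
          then show ?thesis using True by simp
        next
          case False
          have "f n \<le> 1" using fC unfolding cantor_def by blast
          then have f1: "f n = 1" using False by linarith
          have "\<not> (\<exists>g. (g, Suc n) \<in> R \<and> g n = 0)"
          proof
            assume "\<exists>g. (g, Suc n) \<in> R \<and> g n = 0"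
            then obtain g' where "(g', Suc n) \<in> R" "g' n = 0" by blast
            moreover have "(f, Suc n) \<in> R" using v vs n_def by simp
            ultimately have "g' = f" using sound_inj[OF s] by blast
            then show False using f1 \<open>g' n = 0\<close> by simp
          qed
          then have "g0 n = 0" unfolding g0_def by simp
          then show ?thesis using f1 by simp
        qed
        moreover have "g0 n = f n"
        proof -
          have "n < G1 f" using G1f by simp
          then have "g n = f n" by (rule map_upt_eq[OF eq])
          then show ?thesis using \<open>g = g0\<close> by simp
        qed
        ultimately show ?thesis by simp
      next
        case nd: False
        show ?thesis
        proof (cases "f = g0")
          case True
          then have "G1 f = Suc c" unfolding G1_def using nd by (simp only: if_False if_True simp_thms)
          then show ?thesis unfolding F_def by simp
        next
          case False
          then have ex: "\<exists>k. f k \<noteq> g0 k" by auto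
          define k where "k = (LEAST k. f k \<noteq> g0 k)"
          have fk: "f k \<noteq> g0 k" unfolding k_def using LeastI_ex[OF ex] .
          have "G1 f = Suc k" unfolding G1_def k_def using nd False by (simp only: if_False if_True simp_thms)
          then have "k < G1 f" by simp
          then have "g k = f k" by (rule map_upt_eq[OF eq])
          then have "g0 k = f k" using \<open>g = g0\<close> by simp
          then show ?thesis using fk by simp
        qed
      qed
    qed
  qed
  then have "F g0 \<le> M G1" using pr g0C unfolding PR_def by blast
  then show False unfolding F_def MG1 by simp
qed

end
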